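(* Let $G=(L,R,E)$ be a bipartite graph, $f:2^E\to\mathbb{R}_{\ge0}$ non-negative, monotonically non-decreasing and submodular, $p\in(0,1)$, and let $M$ be the set produced by $\mathrm{SIMULATE2}$ (see context). Then $\mathbb{E}[f(M)]\ge\frac p3\cdot\mathrm{OPT}$, where $\mathrm{OPT}=\max\{f(T):T\subseteq E\text{ a matching}\}$.
   Context: $f_M(e)=f(M\cup\{e\})-f(M)$. $\mathrm{SIMULATE2}$: start with $M=N=\emptyset$ and a working copy of $E$. While there is an edge $e^*=(\ell^*,r^* )$ in the working edge set such that $M\cup\{e^*\}$ is a matching, take such an edge maximizing $f_M(e^* )$ (fixed tie-breaking); flip an independent coin with head probability $p$; on heads add $e^*$ to $M$, otherwise add $e^*$ to $N$; then remove all edges incident to $\ell^*$ from the working edge set. Finally let $S$ be the set of edges $(\ell,r)\in N$ that are the only edge of $N$ incident to $r$. *)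

theory Defs
  imports "HOL-Probability.Probability"
begin

definition is_matching :: "('l \<times> 'r) set \<Rightarrow> bool" where
  "is_matching T \<longleftrightarrow>
     (\<forall>e1\<in>T. \<forall>e2\<in>T. e1 \<noteq> e2 \<longrightarrow> fst e1 \<noteq> fst e2 \<and> snd e1 \<noteq> snd e2)"

definition monotone_set_fun :: "('e set \<Rightarrow> real) \<Rightarrow> 'e set \<Rightarrow> bool" where
  "monotone_set_fun f E \<longleftrightarrow> (\<forall>A B. A \<subseteq> B \<and> B \<subseteq> E \<longrightarrow> f A \<le> f B)"

definition submodular :: "('e set \<Rightarrow> real) \<Rightarrow> 'e set \<Rightarrow> bool" where
  "submodular f E \<longleftrightarrow>
     (\<forall>A B. A \<subseteq> E \<and> B \<subseteq> E \<longrightarrow> f (A \<union> B) + f (A \<inter> B) \<le> f A + f B)"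

definition marginal :: "('e set \<Rightarrow> real) \<Rightarrow> 'e set \<Rightarrow> 'e \<Rightarrow> real" where
  "marginal f M e = f (insert e M) - f M"

text \<open>State of SIMULATE2: (M, N, working edge set).  The fixed tie-breaking rule
  is a choice function tb selecting one element from the (nonempty) set of maximisers.\<close>
definition sim2_step ::
  "(('l \<times> 'r) set \<Rightarrow> real) \<Rightarrow> (('l \<times> 'r) set \<Rightarrow> 'l \<times> 'r) \<Rightarrow> real \<Rightarrow>
   ('l \<times> 'r) set \<times> ('l \<times> 'r) set \<times> ('l \<times> 'r) set \<Rightarrow>
   (('l \<times> 'r) set \<times> ('l \<times> 'r) set \<times> ('l \<times> 'r) set) pmf" where
  "sim2_step f tb p s =
     (case s of (M, N, W) \<Rightarrow>
       (let C = {e \<in> W. is_matching (insert e M)} in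
        if C = {} then return_pmf (M, N, W)
        else
          (let e = tb {e \<in> C. \<forall>e'\<in>C. marginal f M e' \<le> marginal f M e};
               W' = W - {e' \<in> W. fst e' = fst e}
           in map_pmf (\<lambda>b. if b then (insert e M, N, W') else (M, insert e N, W'))
                (bernoulli_pmf p))))"

text \<open>Each active step removes at least the chosen edge from the working set, so after
  card E steps the loop has terminated (further steps are the identity).\<close>
definition sim2_run ::
  "('l \<times> 'r) set \<Rightarrow> (('l \<times> 'r) set \<Rightarrow> real) \<Rightarrow> (('l \<times> 'r) set \<Rightarrow> 'l \<times> 'r) \<Rightarrow> real \<Rightarrow>
   (('l \<times> 'r) set \<times> ('l \<times> 'r) set \<times> ('l \<times> 'r) set) pmf" where
  "sim2_run E f tb p =
     ((\<lambda>d. bind_pmf d (sim2_step f tb p)) ^^ card E) (return_pmf ({}, {}, E))"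

definition simulate2_M ::
  "('l \<times> 'r) set \<Rightarrow> (('l \<times> 'r) set \<Rightarrow> real) \<Rightarrow> (('l \<times> 'r) set \<Rightarrow> 'l \<times> 'r) \<Rightarrow> real \<Rightarrow>
   ('l \<times> 'r) set pmf" where
  "simulate2_M E f tb p = map_pmf fst (sim2_run E f tb p)"

definition OPT :: "('l \<times> 'r) set \<Rightarrow> (('l \<times> 'r) set \<Rightarrow> real) \<Rightarrow> real" where
  "OPT E f = Max {f T | T. T \<subseteq> E \<and> is_matching T}"

end

theory Submission
  imports Defs
begin

lemma dimret:
  assumes mono: "monotone_set_fun f E" and sub: "submodular f E"
    and "M \<subseteq> X" "X \<subseteq> E" "u \<in> E"
  shows "f (insert u X) - f X \<le> f (insert u M) - f M"
proof (cases "u \<in> X")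
  case True
  have "insert u M \<subseteq> E" using assms by auto
  then have "f M \<le> f (insert u M)" using mono unfolding monotone_set_fun_def by (meson subset_insertI)
  then show ?thesis using True by (simp add: insert_absorb)
next
  case False
  have e1: "insert u M \<union> X = insert u X" "insert u M \<inter> X = M" using False assms(3) by auto
  have "insert u M \<subseteq> E" using assms by auto
  have sm: "\<And>A B. A \<subseteq> E \<Longrightarrow> B \<subseteq> E \<Longrightarrow> f (A \<union> B) + f (A \<inter> B) \<le> f A + f B"
    using sub unfolding submodular_def by blast
  have "f (insert u M \<union> X) + f (insert u M \<inter> X) \<le> f (insert u M) + f X"
    by (rule sm) fact+
  then show ?thesis unfolding e1 by simp
qed

lemma subadd:
  assumes mono: "monotone_set_fun f E" and sub: "submodular f E"
    and "finite R" "X \<subseteq> E" "R \<subseteq> E"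
  shows "f (X \<union> R) \<le> f X + (\<Sum>u\<in>R. f (insert u X) - f X)"
  using assms(3,5)
proof (induction R rule: finite_induct)
  case empty then show ?case by simp
next
  case (insert r R)
  have "f (X \<union> insert r R) = f (insert r (X \<union> R))" by simp
  also have "\<dots> \<le> f (X \<union> R) + (f (insert r X) - f X)"
    using dimret[OF mono sub, of X "X \<union> R" r] insert assms by auto
  also have "\<dots> \<le> f X + (\<Sum>u\<in>R. f (insert u X) - f X) + (f (insert r X) - f X)"
    using insert by auto
  finally show ?case using insert by (simp add: algebra_simps)
qed

lemma keybound:
  assumes mono: "monotone_set_fun f E" and sub: "submodular f E"
    and "finite R" "M \<subseteq> X" "X \<subseteq> E" "R \<subseteq> E"
    and "\<forall>u\<in>R. f (insert u M) - f M \<le> g" "g \<ge> 0" "card R \<le> k"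
  shows "f (X \<union> R) \<le> f X + real k * g"
proof -
  have "f (X \<union> R) \<le> f X + (\<Sum>u\<in>R. f (insert u X) - f X)"
    using subadd[OF mono sub] assms by auto
  also have "(\<Sum>u\<in>R. f (insert u X) - f X) \<le> (\<Sum>u\<in>R. g)"
  proof (rule sum_mono)
    fix u assume "u \<in> R"
    then have "u \<in> E" "f (insert u M) - f M \<le> g" using assms by auto
    then show "f (insert u X) - f X \<le> g"
      using dimret[OF mono sub, of M X u] assms(4,5) by linarith
  qed
  also have "\<dots> = real (card R) * g" by simp
  also have "\<dots> \<le> real k * g" using assms by (intro mult_right_mono) auto
  finally show ?thesis by simp
qed

lemma match_card:
  assumes "is_matching Op" "finite Op"
  shows "card {u\<in>Op. fst u = x} \<le> 1" "card {u\<in>Op. snd u = y} \<le> 1"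
proof -
  have "\<forall>a\<in>{u\<in>Op. fst u = x}. \<forall>b\<in>{u\<in>Op. fst u = x}. a = b"
    using assms(1) unfolding is_matching_def by blast
  then show "card {u\<in>Op. fst u = x} \<le> 1" using assms(2) by (simp add: card_le_Suc0_iff_eq)
  have "\<forall>a\<in>{u\<in>Op. snd u = y}. \<forall>b\<in>{u\<in>Op. snd u = y}. a = b"
    using assms(1) unfolding is_matching_def by blast
  then show "card {u\<in>Op. snd u = y} \<le> 1" using assms(2) by (simp add: card_le_Suc0_iff_eq)
qed



lemma match_ins2:
  assumes "is_matching (insert u M)" "is_matching (insert e M)" "fst u \<noteq> fst e" "snd u \<noteq> snd e"
  shows "is_matching (insert u (insert e M))"
  using assms unfolding is_matching_def by auto

definition Cset :: "('l\<times>'r) set \<times> ('l\<times>'r) set \<times> ('l\<times>'r) set \<Rightarrow> ('l\<times>'r) set" where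
  "Cset s = (case s of (M,N,W) \<Rightarrow> {e\<in>W. is_matching (insert e M)})"

definition Aset :: "('l\<times>'r) set \<Rightarrow> ('l\<times>'r) set \<times> ('l\<times>'r) set \<times> ('l\<times>'r) set \<Rightarrow> ('l\<times>'r) set" where
  "Aset Op s = (case s of (M,N,W) \<Rightarrow> {u\<in>Op. u\<in>W \<and> is_matching (insert u M)})"

definition Phi :: "(('l\<times>'r) set \<Rightarrow> real) \<Rightarrow> ('l\<times>'r) set \<Rightarrow> real \<Rightarrow> ('l\<times>'r) set \<times> ('l\<times>'r) set \<times> ('l\<times>'r) set \<Rightarrow> real" where
  "Phi f Op a s = a * f (fst s) + f (fst s \<union> Aset Op s)"

lemma step:
  fixes M N W :: "('l\<times>'r) set"
  assumes mono: "monotone_set_fun f E" and sub: "submodular f E"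
    and fin: "finite E" and OpE: "Op \<subseteq> E" and Opm: "is_matching Op"
    and p: "0 < p" "p < 1"
    and tb: "\<forall>S. S \<subseteq> E \<and> S \<noteq> {} \<longrightarrow> tb S \<in> S"
    and ME: "M \<subseteq> E" and WE: "W \<subseteq> E" and a: "a = 1 + 1/p"
  shows "measure_pmf.expectation (sim2_step f tb p (M,N,W)) (Phi f Op a) \<ge> Phi f Op a (M,N,W)"
    and "\<forall>s'\<in>set_pmf (sim2_step f tb p (M,N,W)). fst s' \<subseteq> E \<and> snd (snd s') \<subseteq> E \<and>
          ((s' = (M,N,W) \<and> Cset (M,N,W) = {}) \<or> card (snd (snd s')) < card W)"
    and "finite (set_pmf (sim2_step f tb p (M,N,W)))"
proof -
  have mo: "\<And>A B. A \<subseteq> B \<Longrightarrow> B \<subseteq> E \<Longrightarrow> f A \<le> f B"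
    using mono unfolding monotone_set_fun_def by blast
  define C where "C = {e\<in>W. is_matching (insert e M)}"
  have CC: "Cset (M,N,W) = C" unfolding Cset_def C_def by simp
  define S where "S = {e\<in>C. \<forall>e'\<in>C. marginal f M e' \<le> marginal f M e}"
  have st0: "sim2_step f tb p (M,N,W) = (if C = {} then return_pmf (M,N,W) else
     map_pmf (\<lambda>b. if b then (insert (tb S) M, N, W - {e'\<in>W. fst e' = fst (tb S)})
                        else (M, insert (tb S) N, W - {e'\<in>W. fst e' = fst (tb S)})) (bernoulli_pmf p))"
    unfolding sim2_step_def Let_def C_def S_def by (simp only: prod.case)
  have "(measure_pmf.expectation (sim2_step f tb p (M,N,W)) (Phi f Op a) \<ge> Phi f Op a (M,N,W)) \<and>
    (\<forall>s'\<in>set_pmf (sim2_step f tb p (M,N,W)). fst s' \<subseteq> E \<and> snd (snd s') \<subseteq> E \<and>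
          ((s' = (M,N,W) \<and> Cset (M,N,W) = {}) \<or> card (snd (snd s')) < card W)) \<and>
    finite (set_pmf (sim2_step f tb p (M,N,W)))"
  proof (cases "C = {}")
    case True
    have st: "sim2_step f tb p (M,N,W) = return_pmf (M,N,W)"
      using True st0 by simp
    show ?thesis unfolding st using True CC ME WE by simp
  next
    case False
    define e where "e = tb S"
    define W' where "W' = W - {e'\<in>W. fst e' = fst e}"
    define h where "h = (\<lambda>b. if b then (insert e M, N, W') else (M, insert e N, W'))"
    have st: "sim2_step f tb p (M,N,W) = map_pmf h (bernoulli_pmf p)"
      using False st0 unfolding h_def W'_def e_def by simp
    have finW: "finite W" using WE fin finite_subset by blast
    have finC: "finite C" unfolding C_def using finW by simp
    have "Max (marginal f M ` C) \<in> marginal f M ` C"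
      using finC False by (intro Max_in) auto
    then obtain x where x: "x \<in> C" "marginal f M x = Max (marginal f M ` C)" by auto
    have "\<forall>e'\<in>C. marginal f M e' \<le> marginal f M x" unfolding x(2) using finC by auto
    then have "x \<in> S" unfolding S_def using x(1) by auto
    then have "S \<noteq> {}" by auto
    moreover have "S \<subseteq> E" unfolding S_def C_def using WE by auto
    ultimately have eS: "e \<in> S" unfolding e_def using tb by blast
    then have eC: "e \<in> C" and emax: "\<And>e'. e' \<in> C \<Longrightarrow> marginal f M e' \<le> marginal f M e"
      unfolding S_def by auto
    have eW: "e \<in> W" and em: "is_matching (insert e M)" using eC unfolding C_def by auto
    define g where "g = marginal f M e"
    have eE: "e \<in> E" using eW WE by auto
    have g0: "g \<ge> 0" unfolding g_def marginal_def using mo[of M "insert e M"] eE ME by auto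
    have fe: "f (insert e M) = f M + g" unfolding g_def marginal_def by simp
    define A where "A = Aset Op (M,N,W)"
    define AH where "AH = Aset Op (insert e M, N, W')"
    define AT where "AT = Aset Op (M, insert e N, W')"
    have A_def': "A = {u\<in>Op. u\<in>W \<and> is_matching (insert u M)}" unfolding A_def Aset_def by simp
    have AH_def': "AH = {u\<in>Op. u\<in>W' \<and> is_matching (insert u (insert e M))}" unfolding AH_def Aset_def by simp
    have AT_def': "AT = {u\<in>Op. u\<in>W' \<and> is_matching (insert u M)}" unfolding AT_def Aset_def by simp
    have finOp: "finite Op" using OpE fin finite_subset by blast
    have AC: "A \<subseteq> C" unfolding A_def' C_def by auto
    have margR: "\<forall>u\<in>A. f (insert u M) - f M \<le> g"
      using AC emax unfolding g_def marginal_def by auto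
    have AOp: "A \<subseteq> Op" "AH \<subseteq> Op" "AT \<subseteq> Op" unfolding A_def' AH_def' AT_def' by auto
    have finA: "finite A" using AOp(1) finOp finite_subset by blast
    define RT where "RT = {u\<in>A. fst u = fst e}"
    have RTc: "card RT \<le> 1"
    proof -
      have "RT \<subseteq> {u\<in>Op. fst u = fst e}" unfolding RT_def using AOp by auto
      then have "card RT \<le> card {u\<in>Op. fst u = fst e}" by (intro card_mono) (use finOp in auto)
      then show ?thesis using match_card(1)[OF Opm finOp, of "fst e"] by linarith
    qed
    have subT: "M \<union> A \<subseteq> (M \<union> AT) \<union> RT"
      unfolding RT_def AT_def' W'_def using A_def' by auto
    have boundT: "f (M \<union> A) \<le> f (M \<union> AT) + g"
    proof -
      have "f (M \<union> A) \<le> f ((M \<union> AT) \<union> RT)"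
        by (rule mo[OF subT]) (use ME AOp OpE RT_def in auto)
      also have "\<dots> \<le> f (M \<union> AT) + real 1 * g"
        by (rule keybound[OF mono sub]) (use finOp RT_def ME AOp OpE margR g0 RTc finA in auto)
      finally show ?thesis by simp
    qed
    define RH where "RH = {u\<in>A. fst u = fst e \<or> snd u = snd e}"
    have RHc: "card RH \<le> 2"
    proof -
      have "RH \<subseteq> {u\<in>Op. fst u = fst e} \<union> {u\<in>Op. snd u = snd e}" unfolding RH_def using AOp by auto
      then have "card RH \<le> card ({u\<in>Op. fst u = fst e} \<union> {u\<in>Op. snd u = snd e})"
        by (intro card_mono) (use finOp in auto)
      also have "\<dots> \<le> card {u\<in>Op. fst u = fst e} + card {u\<in>Op. snd u = snd e}" by (rule card_Un_le)
      finally show ?thesis using match_card(1)[OF Opm finOp, of "fst e"] match_card(2)[OF Opm finOp, of "snd e"] by linarith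
    qed
    have subH: "M \<union> A \<subseteq> (insert e M \<union> AH) \<union> RH"
    proof
      fix u assume "u \<in> M \<union> A"
      then consider "u \<in> M" | "u \<in> A" by blast
      then show "u \<in> (insert e M \<union> AH) \<union> RH"
      proof cases
        case 2
        show ?thesis
        proof (cases "fst u = fst e \<or> snd u = snd e")
          case True then show ?thesis using 2 unfolding RH_def by auto
        next
          case F: False
          have "is_matching (insert u M)" "u \<in> W" "u \<in> Op" using 2 unfolding A_def' by auto
          then have "u \<in> AH" unfolding AH_def' W'_def using match_ins2[OF _ em] F by auto
          then show ?thesis by auto
        qed
      qed auto
    qed
    have boundH: "f (M \<union> A) \<le> f (insert e M \<union> AH) + 2 * g"
    proof -
      have "f (M \<union> A) \<le> f ((insert e M \<union> AH) \<union> RH)"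
        by (rule mo[OF subH]) (use ME AOp OpE RH_def eE in auto)
      also have "\<dots> \<le> f (insert e M \<union> AH) + real 2 * g"
        by (rule keybound[OF mono sub]) (use finOp RH_def ME AOp OpE margR g0 RHc finA eE in auto)
      finally show ?thesis by simp
    qed
    have ap: "a * p = p + 1" using p unfolding a by (simp add: field_simps)
    have PT: "Phi f Op a (h True) = a * f (insert e M) + f (insert e M \<union> AH)"
      unfolding Phi_def h_def AH_def by simp
    have PF: "Phi f Op a (h False) = a * f M + f (M \<union> AT)"
      unfolding Phi_def h_def AT_def by simp
    have P0: "Phi f Op a (M,N,W) = a * f M + f (M \<union> A)"
      unfolding Phi_def A_def by simp
    have Ex: "measure_pmf.expectation (sim2_step f tb p (M,N,W)) (Phi f Op a)
        = Phi f Op a (h True) * p + Phi f Op a (h False) * (1 - p)"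
      unfolding st using p by simp
    have i1: "f (insert e M \<union> AH) * p \<ge> (f (M \<union> A) - 2 * g) * p"
      using boundH p by (intro mult_right_mono) auto
    have i2: "f (M \<union> AT) * (1 - p) \<ge> (f (M \<union> A) - g) * (1 - p)"
      using boundT p by (intro mult_right_mono) auto
    have i3: "a * g * p = (p + 1) * g" using ap by (metis mult.commute mult.left_commute)
    have E1: "measure_pmf.expectation (sim2_step f tb p (M,N,W)) (Phi f Op a) \<ge> Phi f Op a (M,N,W)"
      unfolding Ex PT PF P0 fe using i1 i2 i3 by (simp add: algebra_simps)
    have cW: "card W' < card W"
    proof -
      have "W' \<subset> W" unfolding W'_def using eW by auto
      then show ?thesis using finW by (simp add: psubset_card_mono)
    qed
    have W'E: "W' \<subseteq> E" unfolding W'_def using WE by auto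
    have setst: "set_pmf (sim2_step f tb p (M,N,W)) \<subseteq> {h True, h False}"
    proof -
      have "h ` set_pmf (bernoulli_pmf p) \<subseteq> h ` UNIV" by auto
      also have "h ` UNIV = {h True, h False}" by (auto simp: UNIV_bool)
      finally show ?thesis unfolding st set_map_pmf .
    qed
    have E2: "\<forall>s'\<in>set_pmf (sim2_step f tb p (M,N,W)). fst s' \<subseteq> E \<and> snd (snd s') \<subseteq> E \<and>
          ((s' = (M,N,W) \<and> Cset (M,N,W) = {}) \<or> card (snd (snd s')) < card W)"
    proof
      fix s' assume "s' \<in> set_pmf (sim2_step f tb p (M,N,W))"
      then have "s' = h True \<or> s' = h False" using setst by auto
      then show "fst s' \<subseteq> E \<and> snd (snd s') \<subseteq> E \<and>
          ((s' = (M,N,W) \<and> Cset (M,N,W) = {}) \<or> card (snd (snd s')) < card W)"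
        unfolding h_def using cW W'E ME eE by auto
    qed
    have E3: "finite (set_pmf (sim2_step f tb p (M,N,W)))"
      using setst finite_subset by blast
    show ?thesis using E1 E2 E3 by blast
  qed
  then show "measure_pmf.expectation (sim2_step f tb p (M,N,W)) (Phi f Op a) \<ge> Phi f Op a (M,N,W)"
    and "\<forall>s'\<in>set_pmf (sim2_step f tb p (M,N,W)). fst s' \<subseteq> E \<and> snd (snd s') \<subseteq> E \<and>
          ((s' = (M,N,W) \<and> Cset (M,N,W) = {}) \<or> card (snd (snd s')) < card W)"
    and "finite (set_pmf (sim2_step f tb p (M,N,W)))" by blast+
qed



lemma step_ret:
  assumes "{e\<in>W. is_matching (insert e M)} = {}"
  shows "sim2_step f tb p (M,N,W) = return_pmf (M,N,W)"
  unfolding sim2_step_def Let_def by (simp only: prod.case assms if_True simp_thms)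

definition run where
  "run k E f tb p = ((\<lambda>d. bind_pmf d (sim2_step f tb p)) ^^ k) (return_pmf ({},{},E))"

lemma iter:
  assumes mono: "monotone_set_fun f E" and sub: "submodular f E"
    and fin: "finite E" and OpE: "Op \<subseteq> E" and Opm: "is_matching Op"
    and p: "0 < p" "p < 1"
    and tb: "\<forall>S. S \<subseteq> E \<and> S \<noteq> {} \<longrightarrow> tb S \<in> S"
    and a: "a = 1 + 1/p"
  shows "finite (set_pmf (run k E f tb p)) \<and>
    (\<forall>s\<in>set_pmf (run k E f tb p). fst s \<subseteq> E \<and> snd (snd s) \<subseteq> E \<and>
        (card (snd (snd s)) + k \<le> card E \<or> Cset s = {})) \<and>
    measure_pmf.expectation (run k E f tb p) (Phi f Op a) \<ge> Phi f Op a ({},{},E)"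
proof (induction k)
  case 0
  then show ?case unfolding run_def by simp
next
  case (Suc k)
  define d where "d = run k E f tb p"
  have rs: "run (Suc k) E f tb p = bind_pmf d (sim2_step f tb p)"
    unfolding d_def run_def by simp
  have finD: "finite (set_pmf d)" and inv: "\<And>s. s \<in> set_pmf d \<Longrightarrow> fst s \<subseteq> E \<and> snd (snd s) \<subseteq> E \<and>
        (card (snd (snd s)) + k \<le> card E \<or> Cset s = {})"
    and IE: "measure_pmf.expectation d (Phi f Op a) \<ge> Phi f Op a ({},{},E)"
    using Suc unfolding d_def by auto
  have ST: "\<And>s. s \<in> set_pmf d \<Longrightarrow>
     measure_pmf.expectation (sim2_step f tb p s) (Phi f Op a) \<ge> Phi f Op a s \<and>
     (\<forall>s'\<in>set_pmf (sim2_step f tb p s). fst s' \<subseteq> E \<and> snd (snd s') \<subseteq> E \<and>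
          ((s' = s \<and> Cset s = {}) \<or> card (snd (snd s')) < card (snd (snd s)))) \<and>
     finite (set_pmf (sim2_step f tb p s))"
  proof -
    fix s assume sD: "s \<in> set_pmf d"
    obtain M N W where sMNW: "s = (M,N,W)" by (cases s) auto
    have "M \<subseteq> E" "W \<subseteq> E" using inv[OF sD] sMNW by auto
    note st = step[OF mono sub fin OpE Opm p tb this a, of N]
    show "?thesis s" unfolding sMNW using st by simp
  qed
  have fin2: "finite (set_pmf (run (Suc k) E f tb p))"
    unfolding rs set_bind_pmf using finD ST by auto
  have inv2: "\<forall>s'\<in>set_pmf (run (Suc k) E f tb p). fst s' \<subseteq> E \<and> snd (snd s') \<subseteq> E \<and>
        (card (snd (snd s')) + Suc k \<le> card E \<or> Cset s' = {})"
  proof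
    fix s' assume "s' \<in> set_pmf (run (Suc k) E f tb p)"
    then obtain s where sD: "s \<in> set_pmf d" and s's: "s' \<in> set_pmf (sim2_step f tb p s)"
      unfolding rs set_bind_pmf by auto
    obtain M N W where sMNW: "s = (M,N,W)" by (cases s) auto
    have A1: "fst s' \<subseteq> E \<and> snd (snd s') \<subseteq> E" and
      A2: "(s' = s \<and> Cset s = {}) \<or> card (snd (snd s')) < card (snd (snd s))"
      using ST[OF sD] s's by auto
    have A3: "card (snd (snd s)) + k \<le> card E \<or> Cset s = {}" using inv[OF sD] by auto
    have "card (snd (snd s')) + Suc k \<le> card E \<or> Cset s' = {}"
    proof (cases "Cset s = {}")
      case True
      then have "{e\<in>W. is_matching (insert e M)} = {}" unfolding sMNW Cset_def by simp
      then have "s' = s" using s's unfolding sMNW by (simp add: step_ret)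
      then show ?thesis using True by simp
    next
      case False
      then show ?thesis using A2 A3 by auto
    qed
    then show "fst s' \<subseteq> E \<and> snd (snd s') \<subseteq> E \<and>
        (card (snd (snd s')) + Suc k \<le> card E \<or> Cset s' = {})" using A1 by blast
  qed
  have "measure_pmf.expectation (run (Suc k) E f tb p) (Phi f Op a)
      = (\<Sum>s\<in>set_pmf d. pmf d s *\<^sub>R measure_pmf.expectation (sim2_step f tb p s) (Phi f Op a))"
    unfolding rs by (rule pmf_expectation_bind[OF finD]) (use ST in auto)
  also have "\<dots> \<ge> (\<Sum>s\<in>set_pmf d. pmf d s *\<^sub>R Phi f Op a s)"
    by (rule sum_mono) (use ST in \<open>auto intro: mult_left_mono\<close>)
  also have "(\<Sum>s\<in>set_pmf d. pmf d s *\<^sub>R Phi f Op a s) = measure_pmf.expectation d (Phi f Op a)"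
    by (rule integral_measure_pmf[OF finD, symmetric]) auto
  finally have "measure_pmf.expectation (run (Suc k) E f tb p) (Phi f Op a) \<ge> Phi f Op a ({},{},E)"
    using IE by linarith
  then show ?case using fin2 inv2 by blast
qed



theorem lemma10:
  fixes L :: "'l set" and R :: "'r set" and E :: "('l \<times> 'r) set"
    and f :: "('l \<times> 'r) set \<Rightarrow> real" and tb :: "('l \<times> 'r) set \<Rightarrow> 'l \<times> 'r"
    and p :: real
  assumes "finite L" and "finite R" and "E \<subseteq> L \<times> R"
    and "\<forall>A. A \<subseteq> E \<longrightarrow> f A \<ge> 0"
    and "monotone_set_fun f E"
    and "submodular f E"
    and "0 < p" and "p < 1"
    and "\<forall>S. S \<subseteq> E \<and> S \<noteq> {} \<longrightarrow> tb S \<in> S"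
  shows "measure_pmf.expectation (simulate2_M E f tb p) f \<ge> p / 3 * OPT E f"
proof -
  note mono = assms(5) and sub = assms(6) and p = assms(7,8) and tb = assms(9)
  have fin: "finite E" using assms(1-3) finite_subset by blast
  have nn: "\<And>A. A \<subseteq> E \<Longrightarrow> f A \<ge> 0" using assms(4) by blast
  define V where "V = {f T | T. T \<subseteq> E \<and> is_matching T}"
  have "V = f ` {T. T \<subseteq> E \<and> is_matching T}" unfolding V_def by auto
  then have finV: "finite V" using fin by simp
  have "f {} \<in> V" unfolding V_def is_matching_def by auto
  then have "Max V \<in> V" using finV by (intro Max_in) auto
  then obtain Op where OpE: "Op \<subseteq> E" and Opm: "is_matching Op" and fO: "f Op = OPT E f"
    unfolding OPT_def V_def[symmetric] by (auto simp: V_def)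
  define a where "a = 1 + 1/p"
  define r where "r = run (card E) E f tb p"
  note IT = iter[OF mono sub fin OpE Opm p tb a_def, of "card E"]
  have finr: "finite (set_pmf r)" using IT unfolding r_def by blast
  have invr: "\<And>s. s \<in> set_pmf r \<Longrightarrow> fst s \<subseteq> E \<and> snd (snd s) \<subseteq> E \<and>
        (card (snd (snd s)) + card E \<le> card E \<or> Cset s = {})" using IT unfolding r_def by blast
  have Er: "measure_pmf.expectation r (Phi f Op a) \<ge> Phi f Op a ({},{},E)"
    using IT unfolding r_def by blast
  have init: "Aset Op ({},{},E) = Op"
    unfolding Aset_def is_matching_def using OpE by auto
  have a0: "a \<ge> 0" unfolding a_def using p by simp
  have "Phi f Op a ({},{},E) = a * f {} + f Op" unfolding Phi_def init by simp
  also have "\<dots> \<ge> f Op" using a0 nn[of "{}"] by simp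
  finally have I: "Phi f Op a ({},{},E) \<ge> f Op" .
  have PhiFin: "Phi f Op a s = (a + 1) * f (fst s)" if sr: "s \<in> set_pmf r" for s
  proof -
    obtain M N W where sMNW: "s = (M,N,W)" by (cases s) auto
    have WE: "W \<subseteq> E" and disj: "card W + card E \<le> card E \<or> Cset s = {}" using invr[OF sr] sMNW by auto
    have "Cset s = {}"
    proof (cases "Cset s = {}")
      case False
      then have "card W = 0" using disj by auto
      then have "W = {}" using WE fin finite_subset by (metis card_0_eq)
      then show ?thesis unfolding sMNW Cset_def by simp
    qed
    moreover have "Aset Op s \<subseteq> Cset s" unfolding sMNW Aset_def Cset_def by auto
    ultimately have "Aset Op s = {}" by blast
    then show ?thesis unfolding Phi_def by (simp add: algebra_simps)
  qed
  define X where "X = measure_pmf.expectation (simulate2_M E f tb p) f"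
  have X: "X = (\<Sum>s\<in>set_pmf r. pmf r s *\<^sub>R f (fst s))"
  proof -
    have rr: "sim2_run E f tb p = r" unfolding r_def run_def sim2_run_def ..
    show ?thesis unfolding X_def simulate2_M_def rr integral_map_pmf
      by (rule integral_measure_pmf[OF finr]) auto
  qed
  have X0: "X \<ge> 0" unfolding X using invr nn by (auto intro!: sum_nonneg)
  have "measure_pmf.expectation r (Phi f Op a) = (\<Sum>s\<in>set_pmf r. pmf r s *\<^sub>R Phi f Op a s)"
    by (rule integral_measure_pmf[OF finr]) auto
  also have "\<dots> = (\<Sum>s\<in>set_pmf r. (a + 1) * (pmf r s *\<^sub>R f (fst s)))"
    by (rule sum.cong) (auto simp: PhiFin)
  also have "\<dots> = (a + 1) * X" unfolding X by (simp add: sum_distrib_left)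
  finally have main: "(a + 1) * X \<ge> f Op" using Er I by linarith
  have "p * ((a + 1) * X) = (2 * p + 1) * X" unfolding a_def using p by (simp add: field_simps)
  then have "(2 * p + 1) * X \<ge> p * f Op" using main p by (metis mult_left_mono less_imp_le)
  moreover have "3 * X \<ge> (2 * p + 1) * X" using X0 p by (intro mult_right_mono) auto
  ultimately have "3 * X \<ge> p * OPT E f" unfolding fO[symmetric] by linarith
  then show ?thesis unfolding X_def by simp
qed


end
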